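(* Let $n=2k$ with $k\ge 2$. If $S$ is a strong resolving set of $S_n$, then $|S|\ge \frac{3n}{2}$.
   Context: For $n\ge 3$, $S_n$ is the graph with vertex set $\{a_i,b_i,c_i,d_i : 1\le i\le n\}$ and edge set $\{a_ia_{i+1}, b_ib_{i+1}, c_ic_{i+1}, d_id_{i+1}, a_{i+1}b_i, a_ib_i, b_ic_i, c_id_i : 1\le i\le n\}$, indices taken modulo $n$. $d$ is the graph distance. A vertex $w$ strongly resolves distinct vertices $u,v$ if $d(v,w)=d(v,u)+d(u,w)$ or $d(u,w)=d(u,v)+d(v,w)$. A set $S$ is a strong resolving set if every two distinct vertices are strongly resolved by some vertex of $S$. *)

theory Defs
  imports Complex_Main
begin

text \<open>Vertices of S_n: a layer label (a, b, c or d) together with an index in {0..<n}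
  (index i here corresponds to index i+1 in the paper; indices are taken modulo n).\<close>

datatype layer = LA | LB | LC | LD

type_synonym vertex = "layer \<times> nat"

definition verts :: "nat \<Rightarrow> vertex set" where
  "verts n = UNIV \<times> {..<n}"

definition gen_edge :: "nat \<Rightarrow> vertex \<Rightarrow> vertex \<Rightarrow> bool" where
  "gen_edge n u v \<longleftrightarrow> u \<in> verts n \<and> v \<in> verts n \<and>
     (\<exists>i<n.
        (\<exists>x. u = (x, i) \<and> v = (x, Suc i mod n))
      \<or> (u = (LA, Suc i mod n) \<and> v = (LB, i))
      \<or> (u = (LA, i) \<and> v = (LB, i))
      \<or> (u = (LB, i) \<and> v = (LC, i))
      \<or> (u = (LC, i) \<and> v = (LD, i)))"

definition adj :: "nat \<Rightarrow> vertex \<Rightarrow> vertex \<Rightarrow> bool" where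
  "adj n u v \<longleftrightarrow> u \<noteq> v \<and> (gen_edge n u v \<or> gen_edge n v u)"

inductive walk :: "nat \<Rightarrow> vertex \<Rightarrow> nat \<Rightarrow> vertex \<Rightarrow> bool" for n where
  walk_nil: "u \<in> verts n \<Longrightarrow> walk n u 0 u"
| walk_cons: "adj n u w \<Longrightarrow> walk n w k v \<Longrightarrow> walk n u (Suc k) v"

text \<open>Graph distance (S_n is connected, so this is the length of a shortest path).\<close>
definition gdist :: "nat \<Rightarrow> vertex \<Rightarrow> vertex \<Rightarrow> nat" where
  "gdist n u v = (LEAST k. walk n u k v)"

definition strongly_resolves :: "nat \<Rightarrow> vertex \<Rightarrow> vertex \<Rightarrow> vertex \<Rightarrow> bool" where
  "strongly_resolves n w u v \<longleftrightarrow>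
     gdist n v w = gdist n v u + gdist n u w \<or> gdist n u w = gdist n u v + gdist n v w"

definition strong_resolving_set :: "nat \<Rightarrow> vertex set \<Rightarrow> bool" where
  "strong_resolving_set n S \<longleftrightarrow> S \<subseteq> verts n \<and>
     (\<forall>u\<in>verts n. \<forall>v\<in>verts n. u \<noteq> v \<longrightarrow> (\<exists>w\<in>S. strongly_resolves n w u v))"

end

theory Submission
  imports Defs
begin

lemma layer_univ: "(UNIV::layer set) = {LA,LB,LC,LD}"
  using layer.exhaust by auto

lemma finite_verts: "finite (verts n)"
proof -
  have "finite (UNIV::layer set)" by (simp add: layer_univ)
  then show ?thesis unfolding verts_def by (simp add: finite_cartesian_product)
qed

lemma adj_sym: "adj n u v \<Longrightarrow> adj n v u" by (auto simp: adj_def)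
lemma adj_verts: "adj n u v \<Longrightarrow> u \<in> verts n \<and> v \<in> verts n"
  by (auto simp: adj_def gen_edge_def)
lemma walk_verts: "walk n u m v \<Longrightarrow> u \<in> verts n \<and> v \<in> verts n"
  by (induction rule: walk.induct) (auto dest: adj_verts)
lemma walk_trans: "walk n u m v \<Longrightarrow> walk n v p z \<Longrightarrow> walk n u (m+p) z"
proof (induction rule: walk.induct)
  case (walk_nil u) then show ?case by simp
next
  case (walk_cons u w k v)
  have "walk n u (Suc (k+p)) z" by (rule walk.walk_cons[OF walk_cons(1) walk_cons.IH[OF walk_cons.prems]])
  then show ?case by simp
qed
lemma walk_edge: assumes a: "adj n u v" shows "walk n u 1 v"
proof -
  have "v \<in> verts n" using adj_verts[OF a] by blast
  from walk_cons[OF a walk_nil[OF this]] show ?thesis by simp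
qed
lemma walk_snoc: assumes "walk n u m v" "adj n v w" shows "walk n u (Suc m) w"
  using walk_trans[OF assms(1) walk_edge[OF assms(2)]] by simp
lemma walk_rev: "walk n u m v \<Longrightarrow> walk n v m u"
proof (induction rule: walk.induct)
  case (walk_nil u) then show ?case by (rule walk.walk_nil)
next
  case (walk_cons u w k v)
  then show ?case using walk_snoc adj_sym by blast
qed
lemma walk_zero: "walk n u 0 v \<Longrightarrow> u = v"
  by (auto elim: walk.cases)
lemma walk_SucE: "walk n u (Suc m) v \<Longrightarrow> \<exists>x. adj n u x \<and> walk n x m v"
  apply (erule walk.cases)
   apply simp
  apply auto
  done

lemma gdist_walk: "walk n u m v \<Longrightarrow> walk n u (gdist n u v) v"
  unfolding gdist_def by (rule LeastI)
lemma gdist_le: "walk n u m v \<Longrightarrow> gdist n u v \<le> m"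
  unfolding gdist_def by (rule Least_le)

lemma walk_pot:
  assumes lip: "\<And>a b. adj n a b \<Longrightarrow> f a \<le> f b + (1::nat)"
  shows "walk n u m v \<Longrightarrow> f u \<le> f v + m"
proof (induction rule: walk.induct)
  case (walk_nil u) then show ?case by simp
next
  case (walk_cons u w k v)
  from lip[OF walk_cons(1)] walk_cons.IH show ?case by simp
qed

lemma gdist_ge:
  assumes lip: "\<And>a b. adj n a b \<Longrightarrow> f a \<le> f b + (1::nat)"
    and w: "walk n u m v"
  shows "f u \<le> f v + gdist n u v" "f v \<le> f u + gdist n u v"
proof -
  have W: "walk n u (gdist n u v) v" by (rule gdist_walk[OF w])
  show "f u \<le> f v + gdist n u v" by (rule walk_pot[OF lip W])
  show "f v \<le> f u + gdist n u v" by (rule walk_pot[OF lip walk_rev[OF W]])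
qed

lemma Suc_mod: "i < n \<Longrightarrow> Suc i mod n = (if Suc i = n then 0 else Suc i)"
  by (simp add: mod_Suc)

lemma e_layer: assumes "Suc i < n" shows "adj n (x,i) (x,Suc i)"
proof -
  have "gen_edge n (x,i) (x,Suc i)" unfolding gen_edge_def verts_def
    using assms by (intro conjI exI[of _ i]) auto
  then show ?thesis by (simp add: adj_def)
qed
lemma e_wrap: assumes "2 \<le> n" shows "adj n (x,n-1) (x,0)"
proof -
  have "gen_edge n (x,n-1) (x,0)" unfolding gen_edge_def verts_def
    using assms by (intro conjI exI[of _ "n-1"]) auto
  then show ?thesis using assms by (simp add: adj_def)
qed
lemma e_ab: assumes "i < n" shows "adj n (LA,i) (LB,i)"
proof -
  have "gen_edge n (LA,i) (LB,i)" unfolding gen_edge_def verts_def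
    using assms by (intro conjI exI[of _ i]) auto
  then show ?thesis by (simp add: adj_def)
qed
lemma e_ab2: assumes "Suc i < n" shows "adj n (LA,Suc i) (LB,i)"
proof -
  have "gen_edge n (LA,Suc i) (LB,i)" unfolding gen_edge_def verts_def
    using assms by (intro conjI exI[of _ i]) auto
  then show ?thesis by (simp add: adj_def)
qed
lemma e_ab_wrap: assumes "2 \<le> n" shows "adj n (LA,0) (LB,n-1)"
proof -
  have "gen_edge n (LA,0) (LB,n-1)" unfolding gen_edge_def verts_def
    using assms by (intro conjI exI[of _ "n-1"]) auto
  then show ?thesis by (simp add: adj_def)
qed
lemma e_bc: assumes "i < n" shows "adj n (LB,i) (LC,i)"
proof -
  have "gen_edge n (LB,i) (LC,i)" unfolding gen_edge_def verts_def
    using assms by (intro conjI exI[of _ i]) auto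
  then show ?thesis by (simp add: adj_def)
qed
lemma e_cd: assumes "i < n" shows "adj n (LC,i) (LD,i)"
proof -
  have "gen_edge n (LC,i) (LD,i)" unfolding gen_edge_def verts_def
    using assms by (intro conjI exI[of _ i]) auto
  then show ?thesis by (simp add: adj_def)
qed

lemma layer_walk: "i + m < n \<Longrightarrow> walk n (x,i) m (x,i+m)"
proof (induction m arbitrary: i)
  case 0 then show ?case by (auto intro: walk_nil simp: verts_def)
next
  case (Suc m)
  have W: "walk n (x,Suc i) m (x,Suc i+m)" using Suc.IH[of "Suc i"] Suc.prems by simp
  have A: "adj n (x,i) (x,Suc i)" using Suc.prems by (intro e_layer) auto
  have E: "Suc i + m = i + Suc m" by simp
  show ?case using walk_cons[OF A W] unfolding E .
qed

lemma to_d0: assumes "(x,i) \<in> verts n" shows "\<exists>m. walk n (x,i) m (LD,0)"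
proof -
  have i: "i < n" using assms by (auto simp: verts_def)
  have w1: "walk n (x,i) i (x,0)" using walk_rev[OF layer_walk[of 0 i n x]] i by simp
  have n0: "0 < n" using i by simp
  have "\<exists>m. walk n (x,0) m (LD,0)"
  proof (cases x)
    case LA
    have "walk n (LA,0) 3 (LD,0)"
      using walk_cons[OF e_ab[OF n0] walk_cons[OF e_bc[OF n0] walk_edge[OF e_cd[OF n0]]]]
      by (simp add: numeral_3_eq_3)
    then show ?thesis using LA by blast
  next
    case LB
    have "walk n (LB,0) 2 (LD,0)"
      using walk_cons[OF e_bc[OF n0] walk_edge[OF e_cd[OF n0]]]
      by (simp add: numeral_2_eq_2)
    then show ?thesis using LB by blast
  next
    case LC
    then show ?thesis using walk_edge[OF e_cd[OF n0]] by blast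
  next
    case LD
    then show ?thesis using walk_nil[of "(LD,0)" n] n0 by (auto simp: verts_def)
  qed
  then obtain m where "walk n (x,0) m (LD,0)" by blast
  from walk_trans[OF w1 this] show ?thesis by blast
qed

lemma conn: assumes "u \<in> verts n" "v \<in> verts n" shows "\<exists>m. walk n u m v"
proof -
  obtain m1 where "walk n u m1 (LD,0)" using to_d0[of "fst u" "snd u"] assms by auto
  moreover obtain m2 where "walk n v m2 (LD,0)" using to_d0[of "fst v" "snd v"] assms by auto
  ultimately show ?thesis using walk_trans[of n u m1 "(LD,0)" m2 v] walk_rev[of n v m2 "(LD,0)"] by blast
qed



definition rot :: "nat \<Rightarrow> vertex \<Rightarrow> vertex" where
  "rot n u = (fst u, Suc (snd u) mod n)"

lemma rot_verts: "u \<in> verts n \<Longrightarrow> rot n u \<in> verts n"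
  by (auto simp: verts_def rot_def)

lemma rot_inj: assumes "u \<in> verts n" "v \<in> verts n" "rot n u = rot n v" shows "u = v"
  using assms by (cases u, cases v) (auto simp: verts_def rot_def Suc_mod split: if_splits)

lemma rot_gen: assumes "gen_edge n u v" shows "gen_edge n (rot n u) (rot n v)"
proof -
  from assms have uv: "u \<in> verts n" "v \<in> verts n" unfolding gen_edge_def by auto
  from assms obtain i where i: "i < n" and D:
     "(\<exists>x. u = (x, i) \<and> v = (x, Suc i mod n))
      \<or> (u = (LA, Suc i mod n) \<and> v = (LB, i))
      \<or> (u = (LA, i) \<and> v = (LB, i))
      \<or> (u = (LB, i) \<and> v = (LC, i))
      \<or> (u = (LC, i) \<and> v = (LD, i))" unfolding gen_edge_def by blast
  define j where "j = Suc i mod n"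
  have j: "j < n" using i by (simp add: j_def)
  from D have E:
     "(\<exists>x. rot n u = (x, j) \<and> rot n v = (x, Suc j mod n))
      \<or> (rot n u = (LA, Suc j mod n) \<and> rot n v = (LB, j))
      \<or> (rot n u = (LA, j) \<and> rot n v = (LB, j))
      \<or> (rot n u = (LB, j) \<and> rot n v = (LC, j))
      \<or> (rot n u = (LC, j) \<and> rot n v = (LD, j))"
    unfolding j_def by (elim disjE exE) (simp_all add: rot_def)
  show ?thesis unfolding gen_edge_def
    using rot_verts[OF uv(1)] rot_verts[OF uv(2)] j E by blast
qed

lemma rot_adj: assumes "adj n u v" shows "adj n (rot n u) (rot n v)"
proof -
  have uv: "u \<in> verts n" "v \<in> verts n" using adj_verts[OF assms] by auto
  have "rot n u \<noteq> rot n v" using rot_inj[OF uv] assms by (auto simp: adj_def)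
  moreover have "gen_edge n (rot n u) (rot n v) \<or> gen_edge n (rot n v) (rot n u)"
    using assms rot_gen[of n u v] rot_gen[of n v u] unfolding adj_def by blast
  ultimately show ?thesis unfolding adj_def by blast
qed

lemma rot_walk: "walk n u m v \<Longrightarrow> walk n (rot n u) m (rot n v)"
proof (induction rule: walk.induct)
  case (walk_nil u) then show ?case by (intro walk.walk_nil rot_verts)
next
  case (walk_cons u w k v)
  show ?case by (rule walk.walk_cons[OF rot_adj[OF walk_cons(1)] walk_cons.IH])
qed

lemma rotpow_walk: "walk n u m v \<Longrightarrow> walk n ((rot n ^^ j) u) m ((rot n ^^ j) v)"
  by (induction j) (simp_all add: rot_walk)

lemma rotpow_verts: "u \<in> verts n \<Longrightarrow> (rot n ^^ j) u \<in> verts n"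
  by (induction j) (simp_all add: rot_verts)

lemma rotpow_eq: "(rot n ^^ j) (x,i) = (x, (i+j) mod n)" if "i < n"
  using that by (induction j) (simp_all add: rot_def mod_Suc_eq)

lemma rotpow_n: "u \<in> verts n \<Longrightarrow> (rot n ^^ n) u = u"
  by (cases u) (auto simp: verts_def rotpow_eq)

lemma gdist_rot1: assumes "u \<in> verts n" "v \<in> verts n"
  shows "gdist n (rot n u) (rot n v) = gdist n u v"
proof -
  obtain m where "walk n u m v" using conn[OF assms] by blast
  then have W: "walk n u (gdist n u v) v" by (rule gdist_walk)
  have le1: "gdist n (rot n u) (rot n v) \<le> gdist n u v" by (rule gdist_le[OF rot_walk[OF W]])
  have W2: "walk n (rot n u) (gdist n (rot n u) (rot n v)) (rot n v)"
    by (rule gdist_walk[OF rot_walk[OF W]])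
  have n0: "0 < n" using assms by (auto simp: verts_def)
  have "\<And>z. (rot n ^^ (n-1)) (rot n z) = (rot n ^^ n) z"
  proof -
    fix z
    have "(rot n ^^ n) z = (rot n ^^ Suc (n-1)) z" using n0 by simp
    also have "\<dots> = (rot n ^^ (n-1)) (rot n z)" by (simp only: funpow_Suc_right comp_def)
    finally show "(rot n ^^ (n-1)) (rot n z) = (rot n ^^ n) z" by simp
  qed
  then have "walk n u (gdist n (rot n u) (rot n v)) v"
    using rotpow_walk[OF W2, of "n-1"] rotpow_n[OF assms(1)] rotpow_n[OF assms(2)] by simp
  then have "gdist n u v \<le> gdist n (rot n u) (rot n v)" by (rule gdist_le)
  with le1 show ?thesis by simp
qed

lemma gdist_rotpow: assumes "u \<in> verts n" "v \<in> verts n"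
  shows "gdist n ((rot n ^^ j) u) ((rot n ^^ j) v) = gdist n u v"
proof (induction j)
  case 0 then show ?case by simp
next
  case (Suc j)
  have "gdist n ((rot n ^^ Suc j) u) ((rot n ^^ Suc j) v)
      = gdist n (rot n ((rot n ^^ j) u)) (rot n ((rot n ^^ j) v))" by simp
  also have "\<dots> = gdist n ((rot n ^^ j) u) ((rot n ^^ j) v)"
    by (rule gdist_rot1[OF rotpow_verts[OF assms(1)] rotpow_verts[OF assms(2)]])
  finally show ?case using Suc by simp
qed

definition mmd :: "nat \<Rightarrow> vertex \<Rightarrow> vertex \<Rightarrow> bool" where
  "mmd n u v \<longleftrightarrow> (\<forall>x. adj n u x \<longrightarrow> gdist n v x \<le> gdist n v u)
                 \<and> (\<forall>x. adj n v x \<longrightarrow> gdist n u x \<le> gdist n u v)"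

lemma one_side:
  assumes uvw: "u \<in> verts n" "v \<in> verts n" "w \<in> verts n"
    and M: "\<forall>x. adj n u x \<longrightarrow> gdist n v x \<le> gdist n v u"
    and E: "gdist n v w = gdist n v u + gdist n u w"
  shows "w = u"
proof (rule ccontr)
  assume ne: "w \<noteq> u"
  obtain m where "walk n u m w" using conn[OF uvw(1) uvw(3)] by blast
  then have W: "walk n u (gdist n u w) w" by (rule gdist_walk)
  have "gdist n u w \<noteq> 0"
  proof
    assume "gdist n u w = 0"
    with W have "walk n u 0 w" by simp
    then show False using walk_zero ne by blast
  qed
  then obtain m' where m': "gdist n u w = Suc m'" by (cases "gdist n u w") auto
  with W obtain x where ax: "adj n u x" and wx: "walk n x m' w" using walk_SucE by fastforce
  have xv: "x \<in> verts n" using adj_verts[OF ax] by blast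
  obtain p where "walk n v p x" using conn[OF uvw(2) xv] by blast
  then have "walk n v (gdist n v x) x" by (rule gdist_walk)
  from walk_trans[OF this wx] have "gdist n v w \<le> gdist n v x + m'" by (rule gdist_le)
  moreover have "gdist n v x \<le> gdist n v u" using M ax by blast
  ultimately show False using E m' by simp
qed

lemma mmd_res:
  assumes "u \<in> verts n" "v \<in> verts n" "w \<in> verts n" "mmd n u v" "strongly_resolves n w u v"
  shows "w = u \<or> w = v"
  using assms one_side[of u n v w] one_side[of v n u w]
  unfolding mmd_def strongly_resolves_def by blast

lemma forced:
  assumes uv: "u \<in> verts n" "v \<in> verts n" and ne: "u \<noteq> v" and M: "mmd n u v"
    and S: "strong_resolving_set n S" and j: "j \<le> n"
  shows "(rot n ^^ j) u \<in> S \<or> (rot n ^^ j) v \<in> S"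
proof -
  let ?U = "(rot n ^^ j) u" and ?V = "(rot n ^^ j) v"
  have UV: "?U \<in> verts n" "?V \<in> verts n" using rotpow_verts uv by auto
  have "?U \<noteq> ?V"
  proof
    assume "?U = ?V"
    then have "gdist n ?U ?V = 0" using gdist_le[OF walk_nil[OF UV(1)]] by simp
    then have "gdist n u v = 0" using gdist_rotpow[OF uv] by simp
    moreover obtain m where "walk n u m v" using conn[OF uv] by blast
    ultimately have "walk n u 0 v" using gdist_walk by metis
    then show False using walk_zero ne by blast
  qed
  then obtain w where wS: "w \<in> S" and R: "strongly_resolves n w ?U ?V"
    using S UV unfolding strong_resolving_set_def by blast
  have wv: "w \<in> verts n" using S wS unfolding strong_resolving_set_def by blast
  define w' where "w' = (rot n ^^ (n - j)) w"
  have w'v: "w' \<in> verts n" using rotpow_verts wv by (simp add: w'_def)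
  have ww: "(rot n ^^ j) w' = w"
  proof -
    have "(rot n ^^ j) w' = (rot n ^^ (j + (n - j))) w" by (simp add: w'_def funpow_add)
    also have "\<dots> = w" using j rotpow_n[OF wv] by simp
    finally show ?thesis .
  qed
  have "strongly_resolves n w' u v"
    using R unfolding strongly_resolves_def
    using gdist_rotpow[OF uv(1) uv(2), of j] gdist_rotpow[OF uv(1) w'v, of j]
          gdist_rotpow[OF uv(2) w'v, of j] gdist_rotpow[OF uv(2) uv(1), of j]
          gdist_rotpow[OF w'v uv(1), of j] gdist_rotpow[OF w'v uv(2), of j]
    unfolding ww by simp
  then have "w' = u \<or> w' = v" using mmd_res[OF uv w'v M] by blast
  then have "w = ?U \<or> w = ?V" using ww by auto
  then show ?thesis using wS by auto
qed



definition cdist :: "nat \<Rightarrow> nat \<Rightarrow> nat" where "cdist n i = min i (n - i)"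

definition fA :: "nat \<Rightarrow> vertex \<Rightarrow> nat" where "fA n u = cdist n (snd u)"
definition lay :: "layer \<Rightarrow> nat" where
  "lay x = (case x of LC \<Rightarrow> 1 | LD \<Rightarrow> 2 | _ \<Rightarrow> 0)"
definition fB :: "nat \<Rightarrow> vertex \<Rightarrow> nat" where "fB n u = cdist n (snd u) + lay (fst u)"

lemma cdist_step: assumes "i < n" "2 \<le> n"
  shows "cdist n (Suc i mod n) \<le> cdist n i + 1 \<and> cdist n i \<le> cdist n (Suc i mod n) + 1"
proof (cases "Suc i = n")
  case True
  then have "Suc i mod n = 0" by simp
  moreover have "n - i = 1" using True by simp
  ultimately show ?thesis by (simp add: cdist_def min_def)
next
  case False
  then have "Suc i mod n = Suc i" using assms by simp
  moreover have "Suc i < n" using False assms by simp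
  ultimately show ?thesis unfolding cdist_def min_def by auto
qed

lemma gen_lip: assumes g: "gen_edge n a b" and n: "2 \<le> n"
  shows "fA n a \<le> fA n b + 1 \<and> fA n b \<le> fA n a + 1 \<and> fB n a \<le> fB n b + 1 \<and> fB n b \<le> fB n a + 1"
proof -
  from g obtain i where i: "i < n" and D:
     "(\<exists>x. a = (x, i) \<and> b = (x, Suc i mod n))
      \<or> (a = (LA, Suc i mod n) \<and> b = (LB, i))
      \<or> (a = (LA, i) \<and> b = (LB, i))
      \<or> (a = (LB, i) \<and> b = (LC, i))
      \<or> (a = (LC, i) \<and> b = (LD, i))" unfolding gen_edge_def by blast
  have st: "cdist n (Suc i mod n) \<le> cdist n i + 1 \<and> cdist n i \<le> cdist n (Suc i mod n) + 1"
    by (rule cdist_step[OF i n])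
  from D show ?thesis
    by (elim disjE exE) (use st in \<open>auto simp: fA_def fB_def lay_def\<close>)
qed

lemma lipA: "2 \<le> n \<Longrightarrow> adj n a b \<Longrightarrow> fA n a \<le> fA n b + 1"
  unfolding adj_def using gen_lip by blast
lemma lipB: "2 \<le> n \<Longrightarrow> adj n a b \<Longrightarrow> fB n a \<le> fB n b + 1"
  unfolding adj_def using gen_lip by blast



lemma gen_edgeD: assumes "gen_edge n a b"
  shows "\<exists>i<n. (\<exists>x. a = (x, i) \<and> b = (x, Suc i mod n))
      \<or> (a = (LA, Suc i mod n) \<and> b = (LB, i))
      \<or> (a = (LA, i) \<and> b = (LB, i))
      \<or> (a = (LB, i) \<and> b = (LC, i))
      \<or> (a = (LC, i) \<and> b = (LD, i))"
  using assms unfolding gen_edge_def by blast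

lemma nbrs:
  assumes n: "n = 2*k" "2 \<le> k" and a: "adj n (y,j) x" and j: "j < n"
  shows "x = (y, Suc j mod n) \<or> (\<exists>i<n. Suc i mod n = j \<and> x = (y,i))
       \<or> (y = LA \<and> (\<exists>i<n. Suc i mod n = j \<and> x = (LB,i)))
       \<or> (y = LB \<and> x = (LA, Suc j mod n))
       \<or> (y = LA \<and> x = (LB,j)) \<or> (y = LB \<and> x = (LA,j))
       \<or> (y = LB \<and> x = (LC,j)) \<or> (y = LC \<and> x = (LB,j))
       \<or> (y = LC \<and> x = (LD,j)) \<or> (y = LD \<and> x = (LC,j))"
proof -
  from a have "gen_edge n (y,j) x \<or> gen_edge n x (y,j)" unfolding adj_def by blast
  then show ?thesis
  proof
    assume "gen_edge n (y,j) x"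
    from gen_edgeD[OF this] obtain i where "i < n" and D:
      "(\<exists>z. (y,j) = (z, i) \<and> x = (z, Suc i mod n))
      \<or> ((y,j) = (LA, Suc i mod n) \<and> x = (LB, i))
      \<or> ((y,j) = (LA, i) \<and> x = (LB, i))
      \<or> ((y,j) = (LB, i) \<and> x = (LC, i))
      \<or> ((y,j) = (LC, i) \<and> x = (LD, i))" by blast
    then show ?thesis by (elim disjE exE) auto
  next
    assume "gen_edge n x (y,j)"
    from gen_edgeD[OF this] obtain i where "i < n" and D:
      "(\<exists>z. x = (z, i) \<and> (y,j) = (z, Suc i mod n))
      \<or> (x = (LA, Suc i mod n) \<and> (y,j) = (LB, i))
      \<or> (x = (LA, i) \<and> (y,j) = (LB, i))
      \<or> (x = (LB, i) \<and> (y,j) = (LC, i))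
      \<or> (x = (LC, i) \<and> (y,j) = (LD, i))" by blast
    then show ?thesis by (elim disjE exE) auto
  qed
qed

lemma pred_idx: assumes "i < n" "Suc i mod n = j" "j < n"
  shows "i = (if j = 0 then n - 1 else j - 1)"
proof (cases "Suc i = n")
  case True
  then have "Suc i mod n = 0" by simp
  then show ?thesis using True assms by simp
next
  case False
  then have "Suc i mod n = Suc i" using assms by simp
  then show ?thesis using False assms by simp
qed

lemma nbrs2:
  assumes n: "n = 2*k" "2 \<le> k" and a: "adj n (y,j) x" and j: "j < n"
  shows "x = (y, Suc j mod n) \<or> x = (y, if j = 0 then n - 1 else j - 1)
       \<or> (y = LA \<and> x = (LB, if j = 0 then n - 1 else j - 1))
       \<or> (y = LB \<and> x = (LA, Suc j mod n))
       \<or> (y = LA \<and> x = (LB,j)) \<or> (y = LB \<and> x = (LA,j))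
       \<or> (y = LB \<and> x = (LC,j)) \<or> (y = LC \<and> x = (LB,j))
       \<or> (y = LC \<and> x = (LD,j)) \<or> (y = LD \<and> x = (LC,j))"
proof -
  have P: "\<And>i. i < n \<Longrightarrow> Suc i mod n = j \<Longrightarrow> i = (if j = 0 then n - 1 else j - 1)"
    using pred_idx[OF _ _ j] by blast
  let ?p = "if j = 0 then n - 1 else j - 1"
  from nbrs[OF n a j] consider (c1) "x = (y, Suc j mod n)"
    | (c2) i where "i < n" "Suc i mod n = j" "x = (y,i)"
    | (c3) i where "y = LA" "i < n" "Suc i mod n = j" "x = (LB,i)"
    | (c4) "(y = LB \<and> x = (LA, Suc j mod n))
       \<or> (y = LA \<and> x = (LB,j)) \<or> (y = LB \<and> x = (LA,j))
       \<or> (y = LB \<and> x = (LC,j)) \<or> (y = LC \<and> x = (LB,j))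
       \<or> (y = LC \<and> x = (LD,j)) \<or> (y = LD \<and> x = (LC,j))" by blast
  then show ?thesis
  proof cases
    case c1 then show ?thesis by blast
  next
    case (c2 i) then have "i = ?p" using P by blast
    with c2 show ?thesis by blast
  next
    case (c3 i) then have "i = ?p" using P by blast
    with c3 show ?thesis by blast
  next
    case c4 then show ?thesis by blast
  qed
qed



lemma layer_walk': "i + m = j \<Longrightarrow> j < n \<Longrightarrow> walk n (x,i) m (x,j)"
  using layer_walk[of i m n x] by simp

lemma mmd_A: assumes n: "n = 2*k" and k: "2 \<le> k" shows "mmd n (LA,0) (LA,k)"
proof -
  have n2: "2 \<le> n" using n k by simp
  have kn: "k < n" using n k by simp
  have L: "walk n (LA,0) k (LA,k)" using layer_walk[of 0 k n LA] kn by simp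
  have c0: "fA n (LA,0) = 0" by (simp add: fA_def cdist_def)
  have ck: "fA n (LA,k) = k" using n by (simp add: fA_def cdist_def)
  have lo1: "k \<le> gdist n (LA,0) (LA,k)"
    using gdist_ge(2)[where f="fA n", OF lipA[OF n2] L] c0 ck by simp
  have lo2: "k \<le> gdist n (LA,k) (LA,0)"
    using gdist_ge(1)[where f="fA n", OF lipA[OF n2] walk_rev[OF L]] c0 ck by simp
  have w1: "walk n (LA,Suc 0) (k-1) (LA,k)" using layer_walk[of "Suc 0" "k-1" n LA] kn k by simp
  have e2: "k + (k-1) = n-1" using n k by simp
  have w2': "walk n (LA,k) (k-1) (LA,k + (k-1))" by (rule layer_walk) (use n k in simp)
  have w2: "walk n (LA,k) (k-1) (LA,n-1)" using w2' unfolding e2 .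
  have w3: "walk n (LB,0) k (LA,k)"
    using walk_cons[OF adj_sym[OF e_ab2[of 0 n]] w1] k kn by simp
  have w4: "walk n (LB,n-1) k (LA,k)"
    using walk_cons[OF adj_sym[OF e_ab[of "n-1" n]] walk_rev[OF w2]] k n by simp
  have s1: "Suc 0 mod n = Suc 0" using n2 by simp
  have part1: "\<forall>x. adj n (LA,0) x \<longrightarrow> gdist n (LA,k) x \<le> gdist n (LA,k) (LA,0)"
  proof (intro allI impI)
    fix x assume a: "adj n (LA,0) x"
    have "x = (LA,Suc 0) \<or> x = (LA,n-1) \<or> x = (LB,n-1) \<or> x = (LB,0)"
      using nbrs2[OF n k a] n2 s1 by auto
    then have "gdist n (LA,k) x \<le> k"
      using gdist_le[OF walk_rev[OF w1]] gdist_le[OF w2] gdist_le[OF walk_rev[OF w3]]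
            gdist_le[OF walk_rev[OF w4]] by auto
    then show "gdist n (LA,k) x \<le> gdist n (LA,k) (LA,0)" using lo2 by simp
  qed
  have v1: "walk n (LA,0) (k-1) (LA,k-1)" using layer_walk[of 0 "k-1" n LA] kn by simp
  have v2a: "walk n (LA,Suc k) (k-2) (LA,n-1)" by (rule layer_walk') (use n k in simp_all)
  have ev2: "Suc (k-2) = k - 1" using k by arith
  have v2: "walk n (LA,0) (k-1) (LA,Suc k)"
    using walk_cons[OF adj_sym[OF e_wrap[OF n2]] walk_rev[OF v2a]] unfolding ev2 by simp
  have v3: "walk n (LA,0) k (LB,k)"
    using walk_snoc[OF v2 e_ab2[of k n]] k kn n by simp
  have v4: "walk n (LA,0) k (LB,k-1)"
    using walk_snoc[OF v1 e_ab[of "k-1" n]] k kn by simp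
  have s2: "Suc k mod n = Suc k" using n k by simp
  have part2: "\<forall>x. adj n (LA,k) x \<longrightarrow> gdist n (LA,0) x \<le> gdist n (LA,0) (LA,k)"
  proof (intro allI impI)
    fix x assume a: "adj n (LA,k) x"
    have "x = (LA,Suc k) \<or> x = (LA,k-1) \<or> x = (LB,k-1) \<or> x = (LB,k)"
      using nbrs2[OF n k a kn] k s2 by auto
    then have "gdist n (LA,0) x \<le> k"
      using gdist_le[OF v1] gdist_le[OF v2] gdist_le[OF v3] gdist_le[OF v4] by auto
    then show "gdist n (LA,0) x \<le> gdist n (LA,0) (LA,k)" using lo1 by simp
  qed
  show ?thesis unfolding mmd_def using part1 part2 by blast
qed



lemma mmd_B: assumes n: "n = 2*k" and k: "2 \<le> k" shows "mmd n (LB,0) (LD,k)"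
proof -
  have n2: "2 \<le> n" using n k by simp
  have kn: "k < n" using n k by simp
  have n0: "0 < n" using n2 by simp
  have LD0: "walk n (LD,0) k (LD,k)" by (rule layer_walk') (use kn in simp_all)
  have W0: "walk n (LB,0) (Suc (Suc 0)) (LD,0)"
    by (rule walk_cons[OF e_bc[OF n0] walk_edge[OF e_cd[OF n0], simplified]])
  have L: "walk n (LB,0) (Suc (Suc 0) + k) (LD,k)" by (rule walk_trans[OF W0 LD0])
  have c0: "fB n (LB,0) = 0" by (simp add: fB_def cdist_def lay_def)
  have ck: "fB n (LD,k) = k + 2" using n by (simp add: fB_def cdist_def lay_def)
  have lo1: "k + 2 \<le> gdist n (LB,0) (LD,k)"
    using gdist_ge(2)[where f="fB n", OF lipB[OF n2] L] c0 ck by simp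
  have lo2: "k + 2 \<le> gdist n (LD,k) (LB,0)"
    using gdist_ge(1)[where f="fB n", OF lipB[OF n2] walk_rev[OF L]] c0 ck by simp
  have s1: "Suc 0 mod n = Suc 0" using n2 by simp
  have s1n: "Suc 0 < n" using n2 by simp
  have nn: "n - 1 < n" using n2 by simp
  have D1: "walk n (LD,Suc 0) (k-1) (LD,k)" by (rule layer_walk') (use k kn in simp_all)
  have Dn: "walk n (LD,k) (k-1) (LD,n-1)" by (rule layer_walk') (use n k in simp_all)
  have a_c0: "walk n (LC,0) (Suc k) (LD,k)" by (rule walk_cons[OF e_cd[OF n0] LD0])
  have a_b1: "walk n (LB,Suc 0) (Suc (Suc (k-1))) (LD,k)"
    by (rule walk_cons[OF e_bc[OF s1n] walk_cons[OF e_cd[OF s1n] D1]])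
  have a_a1: "walk n (LA,Suc 0) (Suc (Suc (Suc (k-1)))) (LD,k)"
    by (rule walk_cons[OF e_ab[OF s1n] a_b1])
  have a_bn: "walk n (LB,n-1) (Suc (Suc (k-1))) (LD,k)"
    by (rule walk_cons[OF e_bc[OF nn] walk_cons[OF e_cd[OF nn] walk_rev[OF Dn]]])
  have a_a0: "walk n (LA,0) (Suc (Suc (Suc (k-1)))) (LD,k)"
    by (rule walk_cons[OF e_ab_wrap[OF n2] a_bn])
  have part1: "\<forall>x. adj n (LB,0) x \<longrightarrow> gdist n (LD,k) x \<le> gdist n (LD,k) (LB,0)"
  proof (intro allI impI)
    fix x assume a: "adj n (LB,0) x"
    have "x = (LB,Suc 0) \<or> x = (LB,n-1) \<or> x = (LA,Suc 0) \<or> x = (LA,0) \<or> x = (LC,0)"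
      using nbrs2[OF n k a n0] s1 by auto
    then have "gdist n (LD,k) x \<le> k + 2"
      using gdist_le[OF walk_rev[OF a_c0]] gdist_le[OF walk_rev[OF a_b1]]
            gdist_le[OF walk_rev[OF a_a1]] gdist_le[OF walk_rev[OF a_bn]]
            gdist_le[OF walk_rev[OF a_a0]] k by auto
    then show "gdist n (LD,k) x \<le> gdist n (LD,k) (LB,0)" using lo2 by simp
  qed
  have q1: "walk n (LB,0) (Suc (Suc 0) + (k-1)) (LD,k-1)"
    by (rule walk_trans[OF W0 layer_walk']) (use kn in simp_all)
  have q2: "walk n (LB,0) (Suc k) (LC,k)"
    by (rule walk_cons[OF e_bc[OF n0] layer_walk']) (use kn in simp_all)
  have q3a: "walk n (LD,Suc k) (k-2) (LD,n-1)" by (rule layer_walk') (use n k in simp_all)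
  have q3: "walk n (LB,0) (Suc (Suc 0) + Suc (k-2)) (LD,Suc k)"
    by (rule walk_trans[OF W0 walk_cons[OF adj_sym[OF e_wrap[OF n2]] walk_rev[OF q3a]]])
  have s2: "Suc k mod n = Suc k" using n k by simp
  have part2: "\<forall>x. adj n (LD,k) x \<longrightarrow> gdist n (LB,0) x \<le> gdist n (LB,0) (LD,k)"
  proof (intro allI impI)
    fix x assume a: "adj n (LD,k) x"
    have "x = (LD,Suc k) \<or> x = (LD,k-1) \<or> x = (LC,k)"
      using nbrs2[OF n k a kn] k s2 by auto
    then have "gdist n (LB,0) x \<le> k + 2"
      using gdist_le[OF q1] gdist_le[OF q2] gdist_le[OF q3] k by auto
    then show "gdist n (LB,0) x \<le> gdist n (LB,0) (LD,k)" using lo1 by simp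
  qed
  show ?thesis unfolding mmd_def using part1 part2 by blast
qed



theorem lemma3p11:
  fixes n k :: nat and S :: "vertex set"
  assumes "n = 2 * k" and "k \<ge> 2"
    and "strong_resolving_set n S"
  shows "real (card S) \<ge> 3 * real n / 2"
proof -
  note n = assms(1) and k = assms(2) and SR = assms(3)
  have n2: "2 \<le> n" using n k by simp
  have kn: "k < n" using n k by simp
  have n0: "0 < n" using n2 by simp
  have vA0: "(LA,0) \<in> verts n" and vAk: "(LA,k) \<in> verts n" and vB0: "(LB,0) \<in> verts n"
    and vDk: "(LD,k) \<in> verts n" using n0 kn by (auto simp: verts_def)
  have FB: "(LB,t) \<in> S \<or> (LD,(t+k) mod n) \<in> S" if t: "t < n" for t
  proof -
    have "(rot n ^^ t) (LB,0) \<in> S \<or> (rot n ^^ t) (LD,k) \<in> S"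
      by (rule forced[OF vB0 vDk _ mmd_B[OF n k] SR]) (use t in auto)
    then show ?thesis using rotpow_eq[OF n0, of t LB] rotpow_eq[OF kn, of t LD] t
      by (simp add: add.commute)
  qed
  have FA: "(LA,t) \<in> S \<or> (LA,t+k) \<in> S" if t: "t < k" for t
  proof -
    have "(rot n ^^ t) (LA,0) \<in> S \<or> (rot n ^^ t) (LA,k) \<in> S"
      by (rule forced[OF vA0 vAk _ mmd_A[OF n k] SR]) (use t k n in auto)
    moreover have "(k + t) mod n = t + k" using t n by simp
    moreover have "t mod n = t" using t kn by simp
    ultimately show ?thesis using rotpow_eq[OF n0, of t LA] rotpow_eq[OF kn, of t LA] t
      by simp
  qed
  define P where "P t = (if t < n then {(LB,t),(LD,(t+k) mod n)} else {(LA,t-n),(LA,(t-n)+k)})" for t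
  have ne: "\<exists>w. w \<in> S \<inter> P t" if "t < n + k" for t
  proof (cases "t < n")
    case True then show ?thesis using FB[OF True] by (auto simp: P_def)
  next
    case False then have "t - n < k" using that by simp
    then show ?thesis using FA[of "t-n"] False by (auto simp: P_def)
  qed
  define h where "h t = (SOME w. w \<in> S \<inter> P t)" for t
  have hS: "h t \<in> S \<inter> P t" if "t < n + k" for t
    unfolding h_def using someI_ex[OF ne[OF that]] .
  have M: "(t+k) mod n = (if t < k then t+k else t-k)" if "t < n" for t
  proof (cases "t < k")
    case True then show ?thesis using n by simp
  next
    case False
    then have "(t+k) mod n = (t + k - n) mod n" using n that by (simp add: le_mod_geq)
    also have "\<dots> = t + k - n" using that n by simp
    finally show ?thesis using False n by simp
  qed
  have disj: "t = t'" if "t < n + k" "t' < n + k" "x \<in> P t" "x \<in> P t'" for t t' x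
    using that M[of t] M[of t'] n by (auto simp: P_def split: if_splits)
  have inj: "inj_on h {..<n+k}"
  proof (rule inj_onI)
    fix t t' assume "t \<in> {..<n+k}" "t' \<in> {..<n+k}" "h t = h t'"
    then show "t = t'" using hS[of t] hS[of t'] disj[of t t' "h t"] by auto
  qed
  have sub: "h ` {..<n+k} \<subseteq> S" using hS by auto
  have finS: "finite S" using SR finite_verts[of n] unfolding strong_resolving_set_def
    by (auto intro: finite_subset)
  have "n + k = card (h ` {..<n+k})" using card_image[OF inj] by simp
  also have "\<dots> \<le> card S" by (rule card_mono[OF finS sub])
  finally have "n + k \<le> card S" .
  then show ?thesis using n by simp
qed


end
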